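(* Let $d\in \mathbb{N}$. Then the following are equivalent: (i) Every bilipschitz mapping $f\colon \mathbb{Z}^{d}\to \mathbb{R}^{d}$ admits a bilipschitz mapping $F\colon \mathbb{R}^{d}\to\mathbb{R}^{d}$ with $F|_{\mathbb{Z}^{d}}=f$. (ii) For every separated net $A$ of $\mathbb{R}^{d}$ and every bilipschitz mapping $f\colon A\to \mathbb{R}^{d}$ there is a bilipschitz mapping $F\colon \mathbb{R}^{d}\to\mathbb{R}^{d}$ with $F|_{A}=f$. Furthermore, if (i) holds with $\operatorname{bilip}(F)\leq C_{d}(\operatorname{bilip}(f))$ for some monotone increasing function $C_{d}\colon [1,\infty)\to [1,\infty)$, then (ii) holds with \[\operatorname{bilip}(F)\leq K\cdot C_{d}\big(24\sqrt{d}R^{2}K^{3}\operatorname{bilip}(f)\big),\] where $K:= 16\max\{\frac{3d}{r},1\}$ and $A$ is an $r$-separated $R$-net (i.e. $R$ and $r$ are the net and separation constants of $A$).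
   Context: $\|\cdot\|$ is the Euclidean norm. A set $A\subseteq\mathbb{R}^d$ is $r$-separated if $\|a-a'\|\geq r$ for all distinct $a,a'\in A$; it is an $R$-net if for every $x\in\mathbb{R}^d$ there is $a\in A$ with $\|x-a\|\leq R$; a separated net is a set that is an $r$-separated $R$-net for some $r,R>0$. For a mapping $f$, $\operatorname{Lip}(f)=\sup_{x\neq y}\|f(y)-f(x)\|/\|y-x\|$; for injective $f$, $\operatorname{bilip}(f)=\max\{\operatorname{Lip}(f),\operatorname{Lip}(f^{-1})\}$. $f$ is $L$-bilipschitz if $\operatorname{bilip}(f)\le L$, and bilipschitz if it is $L$-bilipschitz for some finite $L$. *)

theory Defs
  imports "HOL-Analysis.Analysis"
begin

definition int_lattice :: "'a::euclidean_space set" where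
  "int_lattice = {x. \<forall>i\<in>Basis. x \<bullet> i \<in> \<int>}"

definition separated :: "real \<Rightarrow> 'a::metric_space set \<Rightarrow> bool" where
  "separated r A \<longleftrightarrow> (\<forall>a\<in>A. \<forall>a'\<in>A. a \<noteq> a' \<longrightarrow> dist a a' \<ge> r)"

definition is_net :: "real \<Rightarrow> 'a::metric_space set \<Rightarrow> bool" where
  "is_net R A \<longleftrightarrow> (\<forall>x. \<exists>a\<in>A. dist x a \<le> R)"

definition separated_net :: "'a::metric_space set \<Rightarrow> bool" where
  "separated_net A \<longleftrightarrow> (\<exists>r>0. \<exists>R>0. separated r A \<and> is_net R A)"

text \<open>Lip(f) on A: supremum of difference quotients (meaningful when bounded).\<close>
definition Lip_on :: "'a::metric_space set \<Rightarrow> ('a \<Rightarrow> 'b::metric_space) \<Rightarrow> real" where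
  "Lip_on A f = (SUP p \<in> {(x, y). x \<in> A \<and> y \<in> A \<and> x \<noteq> y}. dist (f (snd p)) (f (fst p)) / dist (snd p) (fst p))"

definition bilip_on :: "'a::metric_space set \<Rightarrow> ('a \<Rightarrow> 'a) \<Rightarrow> real" where
  "bilip_on A f = max (Lip_on A f) (Lip_on (f ` A) (inv_into A f))"

definition bilipschitz_on :: "'a::metric_space set \<Rightarrow> ('a \<Rightarrow> 'a) \<Rightarrow> bool" where
  "bilipschitz_on A f \<longleftrightarrow> inj_on f A \<and>
     (\<exists>L. L-lipschitz_on A f \<and> L-lipschitz_on (f ` A) (inv_into A f))"

end

theory Submission
  imports Defs
begin


lemma dist_sR: "dist (c *\<^sub>R x) (c *\<^sub>R y) = \<bar>c\<bar> * dist x (y::'a::real_normed_vector)"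
  by (metis dist_norm norm_scaleR scaleR_right_diff_distrib)

lemma bilip_bounds:
  assumes "bilipschitz_on S f" "x \<in> S" "y \<in> S"
  shows "dist (f x) (f y) \<le> bilip_on S f * dist x y \<and> dist x y \<le> bilip_on S f * dist (f x) (f y)"
proof -
  from assms(1) obtain L where inj: "inj_on f S" and L1: "L-lipschitz_on S f"
    and L2: "L-lipschitz_on (f ` S) (inv_into S f)" unfolding bilipschitz_on_def by blast
  show ?thesis
  proof (cases "x = y")
    case True then show ?thesis by simp
  next
    case False
    let ?I = "{(x, y). x \<in> S \<and> y \<in> S \<and> x \<noteq> y}"
    have b1: "bdd_above ((\<lambda>p. dist (f (snd p)) (f (fst p)) / dist (snd p) (fst p)) ` ?I)"
      using L1 by (auto intro!: bdd_aboveI[where M=L] simp: lipschitz_on_def pos_divide_le_eq)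
    have "dist (f x) (f y) / dist x y \<le> Lip_on S f"
      unfolding Lip_on_def using cSUP_upper[OF _ b1, of "(y,x)"] False assms by auto
    hence u: "dist (f x) (f y) \<le> Lip_on S f * dist x y" using False by (simp add: pos_divide_le_eq)
    let ?J = "{(x, y). x \<in> f ` S \<and> y \<in> f ` S \<and> x \<noteq> y}"
    have b2: "bdd_above ((\<lambda>p. dist (inv_into S f (snd p)) (inv_into S f (fst p)) / dist (snd p) (fst p)) ` ?J)"
      using L2 by (auto intro!: bdd_aboveI[where M=L] simp: lipschitz_on_def pos_divide_le_eq)
    have fne: "f x \<noteq> f y" using False inj assms inj_on_def by metis
    have "dist (inv_into S f (f x)) (inv_into S f (f y)) / dist (f x) (f y) \<le> Lip_on (f ` S) (inv_into S f)"
      unfolding Lip_on_def using cSUP_upper[OF _ b2, of "(f y, f x)"] fne assms by auto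
    hence "dist x y / dist (f x) (f y) \<le> Lip_on (f ` S) (inv_into S f)"
      using inj assms by (simp add: inv_into_f_f)
    hence l: "dist x y \<le> Lip_on (f ` S) (inv_into S f) * dist (f x) (f y)" using fne by (simp add: pos_divide_le_eq)
    have "Lip_on S f * dist x y \<le> bilip_on S f * dist x y"
      unfolding bilip_on_def by (intro mult_right_mono) auto
    moreover have "Lip_on (f ` S) (inv_into S f) * dist (f x) (f y) \<le> bilip_on S f * dist (f x) (f y)"
      unfolding bilip_on_def by (intro mult_right_mono) auto
    ultimately show ?thesis using u l by linarith
  qed
qed

lemma bilip_le:
  assumes "x0 \<in> S" "y0 \<in> S" "x0 \<noteq> y0"
    and up: "\<And>x y. x \<in> S \<Longrightarrow> y \<in> S \<Longrightarrow> dist (f x) (f y) \<le> B * dist x y"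
    and lo: "\<And>x y. x \<in> S \<Longrightarrow> y \<in> S \<Longrightarrow> dist x y \<le> B * dist (f x) (f y)"
  shows "bilipschitz_on S f \<and> bilip_on S f \<le> B"
proof -
  have inj: "inj_on f S" unfolding inj_on_def
  proof (intro ballI impI)
    fix x y assume "x \<in> S" "y \<in> S" "f x = f y"
    then show "x = y" using lo[of x y] by simp
  qed
  have "0 < B * dist (f x0) (f y0)" using lo[OF assms(1,2)] assms(3) by (meson dist_pos_lt less_le_trans)
  hence B0: "B \<ge> 0" by (auto simp: zero_less_mult_iff)
  have L1: "B-lipschitz_on S f" using up B0 by (auto simp: lipschitz_on_def)
  have L2: "B-lipschitz_on (f ` S) (inv_into S f)" using lo B0 inj
    by (auto simp: lipschitz_on_def inv_into_f_f)
  have "Lip_on S f \<le> B" unfolding Lip_on_def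
  proof (rule cSUP_least)
    show "{(x, y). x \<in> S \<and> y \<in> S \<and> x \<noteq> y} \<noteq> {}" using assms by auto
  next
    fix p assume "p \<in> {(x, y). x \<in> S \<and> y \<in> S \<and> x \<noteq> y}"
    then show "dist (f (snd p)) (f (fst p)) / dist (snd p) (fst p) \<le> B"
      using up by (auto simp: pos_divide_le_eq)
  qed
  moreover have "Lip_on (f ` S) (inv_into S f) \<le> B" unfolding Lip_on_def
  proof (rule cSUP_least)
    have "f x0 \<noteq> f y0" using assms(1-3) inj by (auto dest: inj_onD)
    hence "(f x0, f y0) \<in> {(x, y). x \<in> f ` S \<and> y \<in> f ` S \<and> x \<noteq> y}" using assms(1,2) by auto
    thus "{(x, y). x \<in> f ` S \<and> y \<in> f ` S \<and> x \<noteq> y} \<noteq> {}" by blast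
  next
    fix p assume "p \<in> {(x, y). x \<in> f ` S \<and> y \<in> f ` S \<and> x \<noteq> y}"
    then show "dist (inv_into S f (snd p)) (inv_into S f (fst p)) / dist (snd p) (fst p) \<le> B"
      using lo inj by (auto simp: pos_divide_le_eq inv_into_f_f)
  qed
  ultimately show ?thesis using inj L1 L2 unfolding bilipschitz_on_def bilip_on_def by auto
qed

lemma bilip_ge1:
  assumes "bilipschitz_on S f" "x \<in> S" "y \<in> S" "x \<noteq> y"
  shows "bilip_on S f \<ge> 1"
proof -
  let ?b = "bilip_on S f"
  have a: "dist (f x) (f y) \<le> ?b * dist x y" and b: "dist x y \<le> ?b * dist (f x) (f y)"
    using bilip_bounds[OF assms(1-3)] by auto
  have dp: "dist x y > 0" using assms by simp
  have "dist (f x) (f y) > 0" using b dp by (metis dist_not_less_zero dist_pos_lt leD mult_zero_right not_less_iff_gr_or_eq zero_less_dist_iff)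
  hence bp: "?b > 0" using b dp by (metis order.strict_trans2 zero_less_mult_pos2)
  have "dist x y \<le> ?b * (?b * dist x y)" using b a bp by (meson mult_left_mono order_trans less_imp_le)
  hence "1 * dist x y \<le> (?b * ?b) * dist x y" by (simp add: mult.assoc)
  hence "1 \<le> ?b * ?b" using dp by (meson mult_le_cancel_right_pos)
  thus ?thesis using bp by (metis less_le_not_le mult_le_cancel_left1 mult_less_cancel_left_pos not_le order.trans)
qed



definition rnd :: "'a::euclidean_space \<Rightarrow> 'a" where
  "rnd x = (\<Sum>i\<in>Basis. of_int (round (x \<bullet> i)) *\<^sub>R i)"

lemma rnd_inner: "j \<in> Basis \<Longrightarrow> rnd x \<bullet> j = of_int (round (x \<bullet> j))"
  unfolding rnd_def by (simp add: inner_sum_left inner_Basis if_distrib sum.delta cong: if_cong)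

lemma rnd_lattice: "rnd x \<in> int_lattice"
  unfolding int_lattice_def by (auto simp: rnd_inner)

lemma rnd_dist: "dist x (rnd x) \<le> real DIM('a) / 2" for x :: "'a::euclidean_space"
proof -
  have "dist x (rnd x) \<le> (\<Sum>b\<in>(Basis::'a set). \<bar>(x - rnd x) \<bullet> b\<bar>)"
    unfolding dist_norm by (rule norm_le_l1)
  also have "\<dots> \<le> (\<Sum>b\<in>(Basis::'a set). 1/2)"
  proof (rule sum_mono)
    fix b :: 'a assume "b \<in> Basis"
    then have "\<bar>(x - rnd x) \<bullet> b\<bar> = \<bar>of_int (round (x \<bullet> b)) - x \<bullet> b\<bar>"
      by (simp add: inner_diff_left rnd_inner)
    also have "\<dots> \<le> 1/2" by (rule of_int_round_abs_le)
    finally show "\<bar>(x - rnd x) \<bullet> b\<bar> \<le> 1/2" .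
  qed
  finally show ?thesis by simp
qed

lemma lattice_sep:
  assumes "x \<in> int_lattice" "y \<in> int_lattice" "x \<noteq> y"
  shows "dist x y \<ge> 1"
proof -
  obtain i where i: "i \<in> Basis" "x \<bullet> i \<noteq> y \<bullet> i" using assms(3) euclidean_eqI by blast
  have "(x - y) \<bullet> i \<in> \<int>" using assms(1,2) i(1) unfolding int_lattice_def
    by (simp add: inner_diff_left Ints_diff)
  moreover have "(x - y) \<bullet> i \<noteq> 0" using i by (simp add: inner_diff_left)
  ultimately have "\<bar>(x - y) \<bullet> i\<bar> \<ge> 1" by (metis Ints_nonzero_abs_ge1)
  also have "\<bar>(x - y) \<bullet> i\<bar> \<le> norm (x - y)" using i(1) by (rule Basis_le_norm)
  finally show ?thesis by (simp add: dist_norm)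
qed

lemma lattice_separated_net: "separated_net (int_lattice :: 'a::euclidean_space set)"
proof -
  have "separated 1 (int_lattice :: 'a set)" unfolding separated_def using lattice_sep by blast
  moreover have "is_net (real DIM('a)) (int_lattice :: 'a set)" unfolding is_net_def
  proof
    fix x :: 'a
    have "dist x (rnd x) \<le> real DIM('a)" using rnd_dist[of x] by simp
    thus "\<exists>a\<in>int_lattice. dist x a \<le> real DIM('a)" using rnd_lattice by blast
  qed
  moreover have "real DIM('a) > 0" by simp
  ultimately show ?thesis unfolding separated_net_def using zero_less_one by blast
qed

lemma lattice_two: "\<exists>x y. (x::'a::euclidean_space) \<in> int_lattice \<and> y \<in> int_lattice \<and> x \<noteq> y"
proof -
  obtain b :: 'a where b: "b \<in> Basis" using nonempty_Basis by blast
  have "(0::'a) \<in> int_lattice" by (simp add: int_lattice_def)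
  moreover have "b \<in> int_lattice" unfolding int_lattice_def
  proof (intro CollectI ballI)
    fix i :: 'a assume "i \<in> Basis"
    show "b \<bullet> i \<in> \<int>" using b \<open>i \<in> Basis\<close> inner_Basis[of b i] by (cases "b = i") simp_all
  qed
  moreover have "b \<noteq> 0" using b by (metis nonzero_Basis)
  ultimately show ?thesis by blast
qed

lemma unit_exists: "\<exists>e::'a::euclidean_space. norm e = 1"
proof -
  obtain b :: 'a where b: "b \<in> Basis" using nonempty_Basis by blast
  thus ?thesis using norm_Basis by blast
qed

lemma net_two:
  fixes A :: "'a::euclidean_space set"
  assumes "is_net R A" "R > 0"
  shows "\<exists>a\<in>A. \<exists>b\<in>A. a \<noteq> b"
proof -
  obtain a where a: "a \<in> A" using assms(1) unfolding is_net_def by blast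
  obtain e :: 'a where e: "norm e = 1" using unit_exists by blast
  obtain b where b: "b \<in> A" "dist (a + (3*R) *\<^sub>R e) b \<le> R" using assms(1) unfolding is_net_def by blast
  have "dist (a + (3*R) *\<^sub>R e) a = norm ((3*R) *\<^sub>R e)" by (simp add: dist_norm)
  also have "\<dots> = 3 * R" using e assms(2) by simp
  finally have "dist (a + (3*R) *\<^sub>R e) a = 3 * R" .
  hence "a \<noteq> b" using b assms(2) by auto
  thus ?thesis using a b by blast
qed

lemma R_ge:
  fixes A :: "'a::euclidean_space set"
  assumes "is_net R A" "separated r A" "r > 0"
  shows "r \<le> 2 * R"
proof -
  obtain a where a: "a \<in> A" using assms(1) unfolding is_net_def by blast
  obtain e :: 'a where e: "norm e = 1" using unit_exists by blast
  define x where "x = a + (r/2) *\<^sub>R e"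
  obtain b where b: "b \<in> A" "dist x b \<le> R" using assms(1) unfolding is_net_def by blast
  have "dist x a = norm ((r/2) *\<^sub>R e)" by (simp add: dist_norm x_def)
  also have "\<dots> = r/2" using e assms(3) by simp
  finally have xa: "dist x a = r/2" .
  show ?thesis
  proof (cases "b = a")
    case True then show ?thesis using b xa by simp
  next
    case False
    hence "dist a b \<ge> r" using assms(2) a b unfolding separated_def by (metis eq_commute)
    moreover have "dist a b \<le> dist x a + dist x b" by (rule dist_triangle3)
    ultimately show ?thesis using b xa by linarith
  qed
qed



lemma push:
  fixes P :: "'a::real_normed_vector set" and v :: "'a \<Rightarrow> 'a"
  assumes rho: "\<rho> > 0" and sepP: "\<And>a b. a\<in>P \<Longrightarrow> b\<in>P \<Longrightarrow> a\<noteq>b \<Longrightarrow> dist a b \<ge> 2*\<rho>"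
    and vb: "\<And>a. a\<in>P \<Longrightarrow> norm (v a) \<le> c*\<rho>" and c0: "c \<ge> 0"
  defines "\<psi> \<equiv> \<lambda>y. if \<exists>a\<in>P. dist y a < \<rho> then (1 - dist y (SOME a. a\<in>P \<and> dist y a < \<rho>)/\<rho>) *\<^sub>R v (SOME a. a\<in>P \<and> dist y a < \<rho>) else 0"
  shows "norm (\<psi> x - \<psi> y) \<le> c * dist x y" and "a\<in>P \<Longrightarrow> \<psi> a = v a"
proof -
  have uniq: "a = b" if "a\<in>P" "b\<in>P" "dist y a < \<rho>" "dist y b < \<rho>" for a b y
  proof (rule ccontr)
    assume "a \<noteq> b"
    hence "dist a b \<ge> 2*\<rho>" using sepP that by blast
    moreover have "dist a b \<le> dist y a + dist y b" by (rule dist_triangle3)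
    ultimately show False using that by linarith
  qed
  have H1: "\<psi> y = (1 - dist y a/\<rho>) *\<^sub>R v a" if "a\<in>P" "dist y a < \<rho>" for a y
  proof -
    have ex: "\<exists>a. a\<in>P \<and> dist y a < \<rho>" using that by blast
    have "(SOME a. a\<in>P \<and> dist y a < \<rho>) \<in> P \<and> dist y (SOME a. a\<in>P \<and> dist y a < \<rho>) < \<rho>"
      by (rule someI_ex[OF ex])
    hence "(SOME a. a\<in>P \<and> dist y a < \<rho>) = a" using uniq that by blast
    thus ?thesis using that unfolding \<psi>_def by auto
  qed
  have H2: "\<psi> y = 0" if "\<not> (\<exists>a\<in>P. dist y a < \<rho>)" for y
    using that unfolding \<psi>_def by auto
  have nb: "norm (\<psi> y) \<le> c * (\<rho> - dist y a)" if "a\<in>P" "dist y a < \<rho>" for a y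
  proof -
    have ge: "1 - dist y a/\<rho> \<ge> 0" using that rho by (simp add: field_simps)
    have "norm (\<psi> y) = (1 - dist y a/\<rho>) * norm (v a)" using H1[OF that] ge by simp
    also have "\<dots> \<le> (1 - dist y a/\<rho>) * (c*\<rho>)" using vb[OF that(1)] ge by (rule mult_left_mono)
    also have "\<dots> = c * (\<rho> - dist y a)" using rho by (simp add: field_simps)
    finally show ?thesis .
  qed
  have key: "norm (\<psi> x - \<psi> y) \<le> c * dist x y" if a: "a\<in>P" "dist x a < \<rho>" for a x y
  proof (cases "\<exists>b\<in>P. dist y b < \<rho>")
    case True
    then obtain b where b: "b\<in>P" "dist y b < \<rho>" by blast
    show ?thesis
    proof (cases "b = a")
      case True
      have "\<psi> x - \<psi> y = ((dist y a - dist x a)/\<rho>) *\<^sub>R v a"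
        using H1[OF a] H1[OF b] True by (simp add: algebra_simps diff_divide_distrib)
      hence "norm (\<psi> x - \<psi> y) = (\<bar>dist y a - dist x a\<bar>/\<rho>) * norm (v a)" using rho by simp
      also have "\<dots> \<le> (\<bar>dist y a - dist x a\<bar>/\<rho>) * (c*\<rho>)"
        using vb[OF a(1)] rho by (intro mult_left_mono) auto
      also have "\<dots> = c * \<bar>dist y a - dist x a\<bar>" using rho by simp
      also have "\<dots> \<le> c * dist x y" using c0
        by (intro mult_left_mono) (auto simp: abs_le_iff, metis dist_commute dist_triangle diff_le_eq add.commute, metis dist_triangle diff_le_eq add.commute)
      finally show ?thesis .
    next
      case False
      have "norm (\<psi> x - \<psi> y) \<le> norm (\<psi> x) + norm (\<psi> y)" by (rule norm_triangle_ineq4)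
      also have "\<dots> \<le> c * (\<rho> - dist x a) + c * (\<rho> - dist y b)" using nb[OF a] nb[OF b] by linarith
      also have "\<dots> = c * (2*\<rho> - dist x a - dist y b)" by (simp add: algebra_simps)
      also have "\<dots> \<le> c * dist x y"
      proof (intro mult_left_mono c0)
        have "dist a b \<ge> 2*\<rho>" using sepP a(1) b(1) False by metis
        moreover have "dist a b \<le> dist a x + dist x y + dist y b"
          by (metis dist_triangle add_mono order_trans order_refl)
        ultimately show "2*\<rho> - dist x a - dist y b \<le> dist x y" by (simp add: dist_commute)
      qed
      finally show ?thesis .
    qed
  next
    case False
    hence "\<psi> y = 0" by (rule H2)
    moreover have "dist y a \<ge> \<rho>" using False a(1) by (meson not_le)
    moreover have "dist y a \<le> dist x y + dist x a" by (metis dist_commute dist_triangle)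
    ultimately have "c * (\<rho> - dist x a) \<le> c * dist x y" using c0 by (intro mult_left_mono) auto
    thus ?thesis using nb[OF a] \<open>\<psi> y = 0\<close> by simp
  qed
  show "norm (\<psi> x - \<psi> y) \<le> c * dist x y"
  proof (cases "\<exists>a\<in>P. dist x a < \<rho>")
    case True then show ?thesis using key by blast
  next
    case F1: False
    show ?thesis
    proof (cases "\<exists>a\<in>P. dist y a < \<rho>")
      case True
      then obtain a where "a\<in>P" "dist y a < \<rho>" by blast
      from key[OF this, of x] show ?thesis by (simp add: norm_minus_commute dist_commute)
    next
      case False
      then show ?thesis using H2 F1 c0 by simp
    qed
  qed
  show "a\<in>P \<Longrightarrow> \<psi> a = v a" using H1[of a a] rho by simp
qed



lemma ge1_mult: "(1::real) \<le> a \<Longrightarrow> 1 \<le> b \<Longrightarrow> 1 \<le> a*b"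
  using mult_mono[of 1 a 1 b] by simp

lemma num1:
  fixes L K s P n Q :: real
  assumes "L \<ge> 1" "K \<ge> 16" "s \<ge> 1" "P \<ge> 24" "24*n \<le> P" "n \<ge> 1" "0 < Q" "Q \<le> 2*P"
  shows "L*(2*P + 3*n + 1) + 2*(Q/(8*L*P))*(P+n) \<le> 24 * s*P^2*K*L"
proof -
  have "1 * (P*2) \<le> L*(P*2)" using assms by (intro mult_right_mono) auto
  hence "Q \<le> L*(P*2)" using assms by linarith
  hence e: "Q/(8*L*P) \<le> 1/4" using assms by (simp add: field_simps)
  have "2*(Q/(8*L*P))*(P+n) \<le> 2*(1/4)*(P+n)" using e assms by (intro mult_right_mono mult_left_mono) auto
  also have "\<dots> \<le> P" using assms by simp
  finally have a: "2*(Q/(8*L*P))*(P+n) \<le> P" .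
  have b: "L*(2*P + 3*n + 1) \<le> L*(3*P)" using assms by (intro mult_left_mono) auto
  have c: "P \<le> L*P" using assms by simp
  have b2: "L*(3*P) = 3*(L*P)" by simp
  have sK: "1 \<le> s*K" using assms by (intro ge1_mult) simp_all
  hence "P*1 \<le> P*(s*K)" using assms by (intro mult_left_mono) auto
  hence h1: "4*(L*P) \<le> 4*(L*(P*(s*K)))" using assms by (intro mult_left_mono) auto
  have "(L*(P*(s*K)))*1 \<le> (L*(P*(s*K)))*P" using assms sK by (intro mult_left_mono) auto
  moreover have "0 \<le> L*(P*(s*K))" using assms by simp
  ultimately have h2: "4*(L*(P*(s*K))) \<le> 24*((L*(P*(s*K)))*P)" by linarith
  have h3: "24 * s*P^2*K*L = 24*((L*(P*(s*K)))*P)" by (simp add: power2_eq_square ac_simps)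
  show ?thesis using a b b2 c h1 h2 h3 by linarith
qed

lemma num2:
  fixes L P n Q :: real
  assumes "L \<ge> 1" "P \<ge> 24" "24*n \<le> P" "n \<ge> 1" "0 < Q"
  shows "2*(Q/(8*L*P))*(P+n) \<le> Q/(2*L)"
proof -
  have "2*(Q/(8*L*P))*(P+n) \<le> 2*(Q/(8*L*P))*(2*P)" using assms by (intro mult_left_mono) auto
  also have "\<dots> = Q/(2*L)" using assms by (simp add: field_simps)
  finally show ?thesis .
qed

lemma num3:
  fixes L K s P n Q m :: real
  assumes "L \<ge> 1" "K \<ge> 16" "s \<ge> 1" "P \<ge> 24" "24*n \<le> P" "n \<ge> 1" "1 \<le> Q" "Q \<le> m"
  shows "m + 2*(P+n) + n \<le> (24 * s*P^2*K*L) * (m/(2*L))"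
proof -
  have r: "(24 * s*P^2*K*L) * (m/(2*L)) = 12 * s*P^2*K*m" using assms by (simp add: field_simps power2_eq_square)
  have m1: "m \<ge> 1" using assms by linarith
  have P2: "1 \<le> P^2" using assms by (simp add: power2_eq_square ge1_mult)
  have "1 \<le> s*P^2" using assms P2 by (intro ge1_mult) simp_all
  moreover have "1 \<le> K" using assms by simp
  ultimately have X1: "1 \<le> s*P^2*K" by (rule ge1_mult)
  hence "m*1 \<le> m*(s*P^2*K)" using m1 by (intro mult_left_mono) auto
  hence a: "m \<le> m*(s*P^2*K)" by simp
  have "1 \<le> s*K" using assms by (intro ge1_mult) simp_all
  hence Y: "1 \<le> s*K*m" using m1 by (rule ge1_mult)
  have "1 \<le> P" using assms by simp
  hence PY: "1 \<le> P*(s*K*m)" using Y by (rule ge1_mult)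
  hence "P*1 \<le> P*(P*(s*K*m))" using assms by (intro mult_left_mono) auto
  moreover have "P*(P*(s*K*m)) = m*(s*P^2*K)" by (simp add: power2_eq_square ac_simps)
  ultimately have b: "P \<le> m*(s*P^2*K)" by simp
  have c: "12 * s*P^2*K*m = 12*(m*(s*P^2*K))" by (simp add: ac_simps)
  have "m + 2*(P+n) + n \<le> m + 3*P" using assms by simp
  also have "\<dots> \<le> 12 * s*P^2*K*m" using a b c m1 by linarith
  finally show ?thesis using r by simp
qed

lemma num4:
  fixes L K s P n Q :: real
  assumes "L \<ge> 1" "K \<ge> 16" "s \<ge> 1" "P \<ge> 24" "1 \<le> Q" "Q \<le> 2*P"
  shows "Q/(8*L*P) \<le> 24 * s*P^2*K*L" and "1 \<le> (24 * s*P^2*K*L) * (Q/(8*L*P))" and "Q/(8*L*P) > 0"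
proof -
  have "1 * (P*2) \<le> L*(P*2)" using assms by (intro mult_right_mono) auto
  hence "Q \<le> L*(P*2)" using assms by linarith
  hence e: "Q/(8*L*P) \<le> 1/4" using assms by (simp add: field_simps)
  have P2: "1 \<le> P^2" using assms by (simp add: power2_eq_square ge1_mult)
  have "1 \<le> s*P^2" using assms P2 by (intro ge1_mult) simp_all
  moreover have "1 \<le> K" using assms by simp
  ultimately have "1 \<le> s*P^2*K" by (rule ge1_mult)
  hence "1 \<le> s*P^2*K*L" using assms(1) by (rule ge1_mult)
  thus "Q/(8*L*P) \<le> 24 * s*P^2*K*L" using e by linarith
  show "Q/(8*L*P) > 0" using assms by simp
  have "(24 * s*P^2*K*L) * (Q/(8*L*P)) = 3 * s*P*K*Q" using assms by (simp add: field_simps power2_eq_square)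
  moreover have "1 \<le> 3 * s*P*K*Q"
  proof -
    have "1 \<le> s*P" using assms by (intro ge1_mult) simp_all
    moreover have "1 \<le> K" using assms by simp
    ultimately have "1 \<le> s*P*K" by (rule ge1_mult)
    hence "1 * 1 \<le> (s*P*K) * Q" using assms by (intro mult_mono) auto
    thus ?thesis by simp
  qed
  ultimately show "1 \<le> (24 * s*P^2*K*L) * (Q/(8*L*P))" by simp
qed



lemma main:
  fixes A :: "'a::euclidean_space set" and f :: "'a \<Rightarrow> 'a" and r R :: real
  assumes r: "r > 0" and R: "R > 0" and sep: "separated r A" and net: "is_net R A" and bf: "bilipschitz_on A f"
  defines "K \<equiv> 16 * max (3 * real DIM('a) / r) 1"
  shows "\<exists>g::'a\<Rightarrow>'a. bilipschitz_on int_lattice g \<and> bilip_on int_lattice g \<le> 24 * sqrt (real DIM('a)) * R^2 * K^3 * bilip_on A f \<and>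
     (\<forall>G::'a\<Rightarrow>'a. bilipschitz_on UNIV G \<and> (\<forall>z\<in>int_lattice. G z = g z) \<longrightarrow>
        (\<exists>F::'a\<Rightarrow>'a. bilipschitz_on UNIV F \<and> (\<forall>x\<in>A. F x = f x) \<and> bilip_on UNIV F \<le> K * bilip_on UNIV G))"
proof -
  define n where "n = real DIM('a)"
  define L where "L = bilip_on A f"
  define sq where "sq = sqrt n"
  define P where "P = K * R"
  define Q where "Q = K * r"
  define eps where "eps = Q / (8*L*P)"
  define T where "T = 24 * sq * P^2*K*L"
  have n1: "n \<ge> 1" unfolding n_def by (simp add: DIM_positive Suc_le_eq)
  have s1: "sq \<ge> 1" unfolding sq_def using n1 by simp
  have K16: "K \<ge> 16" unfolding K_def by simp
  have Kpos: "K > 0" using K16 by simp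
  have "K \<ge> 16 * (3*n/r)" unfolding K_def n_def by simp
  hence "K*r \<ge> 16 * (3*n/r) * r" using r by (intro mult_right_mono) auto
  hence Q48: "Q \<ge> 48 * n" unfolding Q_def using r by simp
  have r2R: "r \<le> 2*R" by (rule R_ge[OF net sep r])
  have QP: "Q \<le> 2*P" unfolding Q_def P_def using r2R Kpos by simp
  have P24n: "24*n \<le> P" using Q48 QP by linarith
  have P24: "P \<ge> 24" using P24n n1 by linarith
  have Q1: "Q \<ge> 1" using Q48 n1 by linarith
  obtain a0 b0 where ab0: "a0\<in>A" "b0\<in>A" "a0\<noteq>b0" using net_two[OF net R] by blast
  have L1: "L \<ge> 1" unfolding L_def by (rule bilip_ge1[OF bf ab0])
  have fb: "dist (f x) (f y) \<le> L * dist x y \<and> dist x y \<le> L * dist (f x) (f y)" if "x\<in>A" "y\<in>A" for x y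
    using bilip_bounds[OF bf that] unfolding L_def .
  have sepA: "dist x y \<ge> r" if "x\<in>A" "y\<in>A" "x\<noteq>y" for x y
    using sep that unfolding separated_def by blast
  have dK: "dist (K *\<^sub>R x) (K *\<^sub>R y) = K * dist x y" for x y :: 'a
    using dist_sR[of K x y] Kpos by simp
  have rndd: "dist x (rnd x) \<le> n/2" for x :: 'a using rnd_dist[of x] unfolding n_def .
  define q where "q = (\<lambda>a::'a. rnd (K *\<^sub>R a))"
  have qlat: "q a \<in> int_lattice" for a unfolding q_def by (rule rnd_lattice)
  have injq: "a = b" if ab: "a\<in>A" "b\<in>A" "q a = q b" for a b
  proof (rule ccontr)
    assume "a \<noteq> b"
    hence "dist a b \<ge> r" using sepA ab by blast
    hence "K * dist a b \<ge> K * r" using Kpos by (intro mult_left_mono) auto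
    hence d1: "dist (K *\<^sub>R a) (K *\<^sub>R b) \<ge> Q" using dK Q_def by simp
    have "dist (K *\<^sub>R a) (K *\<^sub>R b) \<le> dist (K *\<^sub>R a) (q a) + dist (q a) (K *\<^sub>R b)" by (rule dist_triangle)
    also have "\<dots> = dist (K *\<^sub>R a) (q a) + dist (K *\<^sub>R b) (q b)" using ab(3) by (simp add: dist_commute)
    also have "\<dots> \<le> n/2 + n/2" using rndd unfolding q_def by (intro add_mono) auto
    finally show False using d1 Q48 n1 by linarith
  qed
  define \<alpha> where "\<alpha> = (\<lambda>z. if \<exists>a\<in>A. q a = z then SOME a. a\<in>A \<and> q a = z else SOME a. a\<in>A \<and> dist z (K *\<^sub>R a) \<le> P)"
  have \<alpha>1: "\<alpha> z \<in> A \<and> dist z (q (\<alpha> z)) \<le> P + n" for z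
  proof (cases "\<exists>a\<in>A. q a = z")
    case True
    hence ex: "\<exists>a. a\<in>A \<and> q a = z" by blast
    have "\<alpha> z = (SOME a. a\<in>A \<and> q a = z)" using True unfolding \<alpha>_def by simp
    with someI_ex[OF ex] have "\<alpha> z \<in> A \<and> q (\<alpha> z) = z" by simp
    thus ?thesis using P24 n1 by simp
  next
    case False
    obtain a where a: "a\<in>A" "dist ((1/K) *\<^sub>R z) a \<le> R" using net unfolding is_net_def by blast
    have "dist z (K *\<^sub>R a) = K * dist ((1/K) *\<^sub>R z) a" using dK[of "(1/K) *\<^sub>R z" a] Kpos by simp
    also have "\<dots> \<le> K * R" using a Kpos by (intro mult_left_mono) auto
    finally have "dist z (K *\<^sub>R a) \<le> P" unfolding P_def .
    hence ex: "\<exists>a. a\<in>A \<and> dist z (K *\<^sub>R a) \<le> P" using a by blast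
    have "\<alpha> z = (SOME a. a\<in>A \<and> dist z (K *\<^sub>R a) \<le> P)" using False unfolding \<alpha>_def by simp
    with someI_ex[OF ex] have h: "\<alpha> z \<in> A \<and> dist z (K *\<^sub>R \<alpha> z) \<le> P" by simp
    have "dist z (q (\<alpha> z)) \<le> dist z (K *\<^sub>R \<alpha> z) + dist (K *\<^sub>R \<alpha> z) (q (\<alpha> z))" by (rule dist_triangle)
    moreover have "dist (K *\<^sub>R \<alpha> z) (q (\<alpha> z)) \<le> n/2" unfolding q_def by (rule rndd)
    ultimately show ?thesis using h n1 by linarith
  qed
  have \<alpha>2: "\<alpha> (q a) = a" if a: "a\<in>A" for a
  proof -
    have ex: "\<exists>b. b\<in>A \<and> q b = q a" using a by blast
    have "\<alpha> (q a) = (SOME b. b\<in>A \<and> q b = q a)" using a unfolding \<alpha>_def by auto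
    with someI_ex[OF ex] have "\<alpha> (q a) \<in> A \<and> q (\<alpha> (q a)) = q a" by simp
    thus ?thesis using injq a by blast
  qed
  define g where "g = (\<lambda>z. K *\<^sub>R f (\<alpha> z) + eps *\<^sub>R (z - q (\<alpha> z)))"
  have gq: "g (q a) = K *\<^sub>R f a" if "a\<in>A" for a unfolding g_def using \<alpha>2[OF that] by simp
  have N1: "L*(2*P+3*n+1) + 2*eps*(P+n) \<le> T"
    unfolding eps_def T_def using num1[OF L1 K16 s1 P24 P24n n1 _ QP] Q1 by simp
  have N2: "2*eps*(P+n) \<le> Q/(2*L)"
    unfolding eps_def using num2[OF L1 P24 P24n n1] Q1 by simp
  have N3: "m + 2*(P+n) + n \<le> T * (m/(2*L))" if "Q \<le> m" for m
    unfolding T_def using num3[OF L1 K16 s1 P24 P24n n1 Q1 that] .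
  have N4: "eps \<le> T" "1 \<le> T*eps" "eps > 0"
    unfolding eps_def T_def using num4[OF L1 K16 s1 P24 Q1 QP] by auto
  have Lpos: "L > 0" using L1 by simp
  have gb: "dist (g z) (g z') \<le> T * dist z z' \<and> dist z z' \<le> T * dist (g z) (g z')"
    if z: "z\<in>int_lattice" "z'\<in>int_lattice" for z z'
  proof -
    define a where "a = \<alpha> z"
    define a' where "a' = \<alpha> z'"
    have aA: "a\<in>A" "a'\<in>A" and dz: "dist z (q a) \<le> P+n" "dist z' (q a') \<le> P+n"
      using \<alpha>1[of z] \<alpha>1[of z'] unfolding a_def a'_def by auto
    show ?thesis
    proof (cases "a = a'")
      case True
      have "g z - g z' = eps *\<^sub>R (z - z')" unfolding g_def using True a_def a'_def
        by (simp add: algebra_simps)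
      hence e: "dist (g z) (g z') = eps * dist z z'" using N4 by (simp add: dist_norm)
      have "eps * dist z z' \<le> T * dist z z'" using N4 by (intro mult_right_mono) auto
      moreover have "1 * dist z z' \<le> (T*eps) * dist z z'" using N4 by (intro mult_right_mono) auto
      ultimately show ?thesis using e by (simp add: mult.assoc)
    next
      case False
      hence zz: "z \<noteq> z'" using a_def a'_def by auto
      hence d1: "dist z z' \<ge> 1" using lattice_sep z by blast
      define m where "m = dist (K *\<^sub>R a) (K *\<^sub>R a')"
      have "dist a a' \<ge> r" using sepA aA False by blast
      hence "K * dist a a' \<ge> K * r" using Kpos by (intro mult_left_mono) auto
      hence mQ: "Q \<le> m" unfolding m_def Q_def using dK by simp
      define u where "u = K *\<^sub>R f a - K *\<^sub>R f a'"
      define w where "w = eps *\<^sub>R ((z - q a) - (z' - q a'))"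
      have gd: "g z - g z' = u + w" unfolding g_def u_def w_def a_def a'_def by (simp add: algebra_simps)
      have nu_eq: "norm u = K * dist (f a) (f a')" unfolding u_def using dK by (simp add: dist_norm)
      have m_eq: "m = K * dist a a'" unfolding m_def by (rule dK)
      have nu: "norm u \<le> L*m"
      proof -
        have "K * dist (f a) (f a') \<le> K * (L * dist a a')" using fb[OF aA] Kpos by (intro mult_left_mono) auto
        thus ?thesis using nu_eq m_eq by (simp add: ac_simps)
      qed
      have nu2: "m \<le> L * norm u"
      proof -
        have "K * dist a a' \<le> K * (L * dist (f a) (f a'))" using fb[OF aA] Kpos by (intro mult_left_mono) auto
        thus ?thesis using nu_eq m_eq by (simp add: ac_simps)
      qed
      have nw: "norm w \<le> 2*eps*(P+n)"
      proof -
        have "norm ((z - q a) - (z' - q a')) \<le> norm (z - q a) + norm (z' - q a')" by (rule norm_triangle_ineq4)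
        also have "\<dots> \<le> 2*(P+n)" using dz by (simp add: dist_norm)
        finally have "eps * norm ((z - q a) - (z' - q a')) \<le> eps * (2*(P+n))" using N4 by (intro mult_left_mono) auto
        thus ?thesis unfolding w_def using N4 by simp
      qed
      have qa: "dist (q a) (K *\<^sub>R a) \<le> n/2" "dist (q a') (K *\<^sub>R a') \<le> n/2"
        unfolding q_def using rndd by (simp_all add: dist_commute)
      have dzz: "dist z z' \<le> m + 2*(P+n) + n"
      proof -
        have "dist z z' \<le> dist z (q a) + dist (q a) z'" by (rule dist_triangle)
        moreover have "dist (q a) z' \<le> dist (q a) (K *\<^sub>R a) + dist (K *\<^sub>R a) z'" by (rule dist_triangle)
        moreover have "dist (K *\<^sub>R a) z' \<le> dist (K *\<^sub>R a) (K *\<^sub>R a') + dist (K *\<^sub>R a') z'" by (rule dist_triangle)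
        moreover have "dist (K *\<^sub>R a') z' \<le> dist (K *\<^sub>R a') (q a') + dist (q a') z'" by (rule dist_triangle)
        ultimately show ?thesis using dz qa unfolding m_def by (simp add: dist_commute)
      qed
      have mzz: "m \<le> dist z z' + 2*(P+n) + n"
      proof -
        have "dist (K *\<^sub>R a) (K *\<^sub>R a') \<le> dist (K *\<^sub>R a) (q a) + dist (q a) (K *\<^sub>R a')" by (rule dist_triangle)
        moreover have "dist (q a) (K *\<^sub>R a') \<le> dist (q a) z + dist z (K *\<^sub>R a')" by (rule dist_triangle)
        moreover have "dist z (K *\<^sub>R a') \<le> dist z z' + dist z' (K *\<^sub>R a')" by (rule dist_triangle)
        moreover have "dist z' (K *\<^sub>R a') \<le> dist z' (q a') + dist (q a') (K *\<^sub>R a')" by (rule dist_triangle)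
        ultimately show ?thesis using dz qa unfolding m_def by (simp add: dist_commute)
      qed
      have upper: "dist (g z) (g z') \<le> T * dist z z'"
      proof -
        have "dist (g z) (g z') = norm (u + w)" using gd by (simp add: dist_norm)
        also have "\<dots> \<le> norm u + norm w" by (rule norm_triangle_ineq)
        also have "\<dots> \<le> L*m + 2*eps*(P+n)" using nu nw by linarith
        also have "\<dots> \<le> L*(dist z z' + 2*(P+n) + n) + 2*eps*(P+n)"
          using mzz Lpos by (intro add_right_mono mult_left_mono) auto
        also have "\<dots> = L*dist z z' + (L*(2*P+3*n+1) + 2*eps*(P+n)) - L" by (simp add: algebra_simps)
        also have "\<dots> \<le> L*dist z z' + T - L" using N1 by linarith
        also have "\<dots> \<le> T * dist z z'"
        proof -
          have TL: "T - L \<ge> 0" using N1 N4 L1 P24 n1 by (smt (verit) mult_le_cancel_left1 zero_le_mult_iff)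
          have "(T - L) * 1 \<le> (T - L) * dist z z'" using TL d1 by (intro mult_left_mono) auto
          thus ?thesis by (simp add: algebra_simps)
        qed
        finally show ?thesis .
      qed
      have lower: "dist z z' \<le> T * dist (g z) (g z')"
      proof -
        have a1: "m/L \<le> norm u" using nu2 Lpos by (simp add: divide_le_eq mult.commute)
        have a2: "Q/(2*L) \<le> m/(2*L)" using mQ Lpos by (simp add: divide_right_mono)
        have a3: "m/L - m/(2*L) = m/(2*L)" using Lpos by (simp add: field_simps)
        have "norm u - norm w \<le> norm (u + w)" by (metis norm_diff_ineq norm_minus_cancel diff_minus_eq_add)
        hence ge: "m/(2*L) \<le> norm (u + w)" using a1 a2 a3 nw N2 by linarith
        have "dist z z' \<le> T * (m/(2*L))" using dzz N3[OF mQ] by linarith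
        also have "\<dots> \<le> T * norm (u + w)" using ge N4 by (intro mult_left_mono) auto
        finally show ?thesis using gd by (simp add: dist_norm)
      qed
      show ?thesis using upper lower by blast
    qed
  qed
  obtain x0 y0 :: 'a where xy0: "x0 \<in> int_lattice" "y0 \<in> int_lattice" "x0 \<noteq> y0" using lattice_two by blast
  have gbil: "bilipschitz_on int_lattice g \<and> bilip_on int_lattice g \<le> T"
    by (rule bilip_le[OF xy0]) (use gb in blast)+
  have Teq: "T = 24 * sqrt (real DIM('a)) * R^2 * K^3 * bilip_on A f"
    unfolding T_def sq_def n_def P_def L_def by (simp add: power2_eq_square power3_eq_cube ac_simps)
  have part3: "\<forall>G. bilipschitz_on UNIV G \<and> (\<forall>z\<in>int_lattice. G z = g z) \<longrightarrow>
        (\<exists>F. bilipschitz_on UNIV F \<and> (\<forall>x\<in>A. F x = f x) \<and> bilip_on UNIV F \<le> K * bilip_on UNIV G)"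
  proof (intro allI impI)
    fix G :: "'a \<Rightarrow> 'a" assume G: "bilipschitz_on UNIV G \<and> (\<forall>z\<in>int_lattice. G z = g z)"
    define bG where "bG = bilip_on UNIV G"
    have Gb: "dist (G x) (G y) \<le> bG * dist x y \<and> dist x y \<le> bG * dist (G x) (G y)" for x y
      using bilip_bounds[of UNIV G x y] G unfolding bG_def by blast
    have bG1: "bG \<ge> 1" unfolding bG_def using bilip_ge1[of UNIV G x0 y0] G xy0 by blast
    define c where "c = n / Q"
    have c0: "c \<ge> 0" unfolding c_def using n1 Q1 by simp
    have c48: "c \<le> 1/48" unfolding c_def using Q48 Q1 by (simp add: divide_le_eq)
    define Pset where "Pset = (\<lambda>a. K *\<^sub>R a) ` A"
    define \<rho> where "\<rho> = Q/2"
    define v where "v = (\<lambda>y::'a. rnd y - y)"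
    define \<psi> where "\<psi> = (\<lambda>y. if \<exists>a\<in>Pset. dist y a < \<rho> then (1 - dist y (SOME a. a\<in>Pset \<and> dist y a < \<rho>)/\<rho>) *\<^sub>R v (SOME a. a\<in>Pset \<and> dist y a < \<rho>) else 0)"
    have rho0: "\<rho> > 0" unfolding \<rho>_def using Q1 by simp
    have sepP: "dist a b \<ge> 2*\<rho>" if H: "a\<in>Pset" "b\<in>Pset" "a\<noteq>b" for a b
    proof -
      obtain a1 b1 where ab: "a1\<in>A" "b1\<in>A" "a = K *\<^sub>R a1" "b = K *\<^sub>R b1" using H(1,2) unfolding Pset_def by blast
      hence "a1 \<noteq> b1" using H(3) by blast
      hence "dist a1 b1 \<ge> r" using sepA ab by blast
      hence "K * dist a1 b1 \<ge> K * r" using Kpos by (intro mult_left_mono) auto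
      thus ?thesis using ab dK unfolding \<rho>_def Q_def by simp
    qed
    have vb: "norm (v a) \<le> c*\<rho>" for a
    proof -
      have "norm (v a) = dist a (rnd a)" unfolding v_def by (simp add: dist_norm norm_minus_commute)
      also have "\<dots> \<le> n/2" by (rule rndd)
      also have "n/2 = c*\<rho>" unfolding c_def \<rho>_def using Q1 by simp
      finally show ?thesis .
    qed
    have psiL: "norm (\<psi> x - \<psi> y) \<le> c * dist x y" for x y
      unfolding \<psi>_def by (rule push(1)[OF rho0 sepP vb c0])
    have psiv: "\<psi> a = v a" if "a \<in> Pset" for a
      unfolding \<psi>_def by (rule push(2)[OF rho0 sepP vb c0 that])
    define \<Psi> where "\<Psi> = (\<lambda>x. K *\<^sub>R x + \<psi> (K *\<^sub>R x))"
    define F where "F = (\<lambda>x. (1/K) *\<^sub>R G (\<Psi> x))"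
    have Psi_up: "dist (\<Psi> x) (\<Psi> y) \<le> (1+c)*K*dist x y" for x y
    proof -
      have "\<Psi> x - \<Psi> y = (K *\<^sub>R x - K *\<^sub>R y) + (\<psi> (K *\<^sub>R x) - \<psi> (K *\<^sub>R y))" unfolding \<Psi>_def by simp
      hence "dist (\<Psi> x) (\<Psi> y) \<le> norm (K *\<^sub>R x - K *\<^sub>R y) + norm (\<psi> (K *\<^sub>R x) - \<psi> (K *\<^sub>R y))"
        by (simp add: dist_norm norm_triangle_ineq)
      also have "\<dots> \<le> K * dist x y + c * (K * dist x y)" using psiL[of "K *\<^sub>R x" "K *\<^sub>R y"] dK[of x y]
        by (simp add: dist_norm)
      finally show ?thesis by (simp add: algebra_simps)
    qed
    have Psi_lo: "(1-c)*K*dist x y \<le> dist (\<Psi> x) (\<Psi> y)" for x y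
    proof -
      have "K *\<^sub>R x - K *\<^sub>R y = (\<Psi> x - \<Psi> y) - (\<psi> (K *\<^sub>R x) - \<psi> (K *\<^sub>R y))" unfolding \<Psi>_def by simp
      hence "norm (K *\<^sub>R x - K *\<^sub>R y) \<le> norm (\<Psi> x - \<Psi> y) + norm (\<psi> (K *\<^sub>R x) - \<psi> (K *\<^sub>R y))"
        by (metis norm_triangle_ineq4)
      hence "K * dist x y \<le> dist (\<Psi> x) (\<Psi> y) + c * (K * dist x y)" using psiL[of "K *\<^sub>R x" "K *\<^sub>R y"] dK[of x y]
        by (simp add: dist_norm)
      thus ?thesis by (simp add: algebra_simps)
    qed
    have Fd: "dist (F x) (F y) = dist (G (\<Psi> x)) (G (\<Psi> y)) / K" for x y
      unfolding F_def using dist_sR[of "1/K"] Kpos by simp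
    have Fup: "dist (F x) (F y) \<le> (K*bG) * dist x y" for x y
    proof -
      have "dist (G (\<Psi> x)) (G (\<Psi> y)) \<le> bG * dist (\<Psi> x) (\<Psi> y)" using Gb by blast
      also have "\<dots> \<le> bG * ((1+c)*K*dist x y)" using Psi_up bG1 by (intro mult_left_mono) auto
      also have "bG * ((1+c)*K*dist x y) = ((bG * (1+c)) * dist x y) * K" by (simp add: ac_simps)
      finally have "dist (G (\<Psi> x)) (G (\<Psi> y)) / K \<le> (bG * (1+c)) * dist x y" using Kpos by (simp add: pos_divide_le_eq)
      hence "dist (F x) (F y) \<le> (bG * (1+c)) * dist x y" using Fd by simp
      also have "\<dots> \<le> (K*bG) * dist x y"
      proof (intro mult_right_mono)
        show "bG * (1+c) \<le> K*bG" using c48 K16 bG1 by (simp add: mult.commute mult_left_mono)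
      qed simp
      finally show ?thesis .
    qed
    have Flo: "dist x y \<le> (K*bG) * dist (F x) (F y)" for x y
    proof -
      have "(1-c)*K*dist x y \<le> bG * dist (G (\<Psi> x)) (G (\<Psi> y))" using Psi_lo[of x y] Gb[of "\<Psi> x" "\<Psi> y"] by linarith
      also have "\<dots> = bG * (K * dist (F x) (F y))" using Fd Kpos by simp
      finally have h: "K * ((1-c)*dist x y) \<le> K * (bG * dist (F x) (F y))" by (simp add: ac_simps)
      hence h2: "(1-c)*dist x y \<le> bG * dist (F x) (F y)" using Kpos by simp
      have c2: "c*(2*dist x y) \<le> (1/2)*(2*dist x y)" using c48 by (intro mult_right_mono) auto
      have "2 * ((1-c)*dist x y) = 2*dist x y - c*(2*dist x y)" by (simp add: algebra_simps)
      hence "dist x y \<le> 2 * ((1-c)*dist x y)" using c2 by linarith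
      also have "\<dots> \<le> 2 * (bG * dist (F x) (F y))" using h2 by simp
      also have "\<dots> \<le> K * (bG * dist (F x) (F y))" using K16 bG1 by (intro mult_right_mono) auto
      finally show ?thesis by (simp add: ac_simps)
    qed
    have Fagree: "F a = f a" if "a\<in>A" for a
    proof -
      have "K *\<^sub>R a \<in> Pset" unfolding Pset_def using that by blast
      hence "\<Psi> a = q a" unfolding \<Psi>_def q_def using psiv v_def by simp
      hence "G (\<Psi> a) = K *\<^sub>R f a" using G qlat gq[OF that] by simp
      thus ?thesis unfolding F_def using Kpos by simp
    qed
    have "bilipschitz_on UNIV F \<and> bilip_on UNIV F \<le> K*bG"
      by (rule bilip_le[of x0 UNIV y0]) (use xy0 Fup Flo in auto)
    thus "\<exists>F. bilipschitz_on UNIV F \<and> (\<forall>x\<in>A. F x = f x) \<and> bilip_on UNIV F \<le> K * bilip_on UNIV G"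
      using Fagree unfolding bG_def by blast
  qed
  have gb2: "bilip_on int_lattice g \<le> 24 * sqrt (real DIM('a)) * R^2 * K^3 * bilip_on A f"
    using gbil Teq by simp
  show ?thesis
  proof (rule exI[of _ g], intro conjI)
    show "bilipschitz_on int_lattice g" using gbil by blast
    show "bilip_on int_lattice g \<le> 24 * sqrt (real DIM('a)) * R^2 * K^3 * bilip_on A f" by (rule gb2)
  qed (rule part3)
qed


theorem theorem1p1:
  fixes d :: nat
  defines "d \<equiv> DIM('a::euclidean_space)"
  shows
  "((\<forall>f :: 'a \<Rightarrow> 'a. bilipschitz_on int_lattice f \<longrightarrow>
       (\<exists>F :: 'a \<Rightarrow> 'a. bilipschitz_on UNIV F \<and> (\<forall>x\<in>int_lattice. F x = f x)))
    \<longleftrightarrow>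
    (\<forall>(A :: 'a set) (f :: 'a \<Rightarrow> 'a). separated_net A \<and> bilipschitz_on A f \<longrightarrow>
       (\<exists>F :: 'a \<Rightarrow> 'a. bilipschitz_on UNIV F \<and> (\<forall>x\<in>A. F x = f x))))
   \<and>
   (\<forall>C :: real \<Rightarrow> real.
      mono_on {1..} C \<and> (\<forall>t\<ge>1. C t \<ge> 1) \<and>
      (\<forall>f :: 'a \<Rightarrow> 'a. bilipschitz_on int_lattice f \<longrightarrow>
         (\<exists>F :: 'a \<Rightarrow> 'a. bilipschitz_on UNIV F \<and> (\<forall>x\<in>int_lattice. F x = f x) \<and>
            bilip_on UNIV F \<le> C (bilip_on int_lattice f)))
      \<longrightarrow>
      (\<forall>(A :: 'a set) (r :: real) (R :: real) (f :: 'a \<Rightarrow> 'a).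
         r > 0 \<and> R > 0 \<and> separated r A \<and> is_net R A \<and> bilipschitz_on A f \<longrightarrow>
         (let K = 16 * max (3 * real d / r) 1 in
          \<exists>F :: 'a \<Rightarrow> 'a. bilipschitz_on UNIV F \<and> (\<forall>x\<in>A. F x = f x) \<and>
            bilip_on UNIV F \<le> K * C (24 * sqrt (real d) * R\<^sup>2 * K ^ 3 * bilip_on A f))))"
proof -
  have eq: "(\<forall>f :: 'a \<Rightarrow> 'a. bilipschitz_on int_lattice f \<longrightarrow>
       (\<exists>F :: 'a \<Rightarrow> 'a. bilipschitz_on UNIV F \<and> (\<forall>x\<in>int_lattice. F x = f x)))
    \<longleftrightarrow>
    (\<forall>(A :: 'a set) (f :: 'a \<Rightarrow> 'a). separated_net A \<and> bilipschitz_on A f \<longrightarrow>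
       (\<exists>F :: 'a \<Rightarrow> 'a. bilipschitz_on UNIV F \<and> (\<forall>x\<in>A. F x = f x)))" (is "?I \<longleftrightarrow> ?II")
  proof
    assume I: ?I
    show ?II
    proof (intro allI impI)
      fix A :: "'a set" and f :: "'a \<Rightarrow> 'a"
      assume H: "separated_net A \<and> bilipschitz_on A f"
      then obtain r R where rR: "r > 0" "R > 0" "separated r A" "is_net R A"
        unfolding separated_net_def by blast
      obtain g :: "'a \<Rightarrow> 'a" where g1: "bilipschitz_on int_lattice g"
        and g3: "\<forall>G::'a\<Rightarrow>'a. bilipschitz_on UNIV G \<and> (\<forall>z\<in>int_lattice. G z = g z) \<longrightarrow>
          (\<exists>F::'a\<Rightarrow>'a. bilipschitz_on UNIV F \<and> (\<forall>x\<in>A. F x = f x) \<and>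
             bilip_on UNIV F \<le> (16 * max (3 * real DIM('a) / r) 1) * bilip_on UNIV G)"
        using main[OF rR(1,2,3,4)] H by blast
      obtain G where "bilipschitz_on UNIV G" "\<forall>z\<in>int_lattice. G z = g z" using I g1 by blast
      then show "\<exists>F :: 'a \<Rightarrow> 'a. bilipschitz_on UNIV F \<and> (\<forall>x\<in>A. F x = f x)" using g3 by blast
    qed
  next
    assume II: ?II
    show ?I using II lattice_separated_net by blast
  qed
  have part2: "\<forall>C :: real \<Rightarrow> real.
      mono_on {1..} C \<and> (\<forall>t\<ge>1. C t \<ge> 1) \<and>
      (\<forall>f :: 'a \<Rightarrow> 'a. bilipschitz_on int_lattice f \<longrightarrow>
         (\<exists>F :: 'a \<Rightarrow> 'a. bilipschitz_on UNIV F \<and> (\<forall>x\<in>int_lattice. F x = f x) \<and>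
            bilip_on UNIV F \<le> C (bilip_on int_lattice f)))
      \<longrightarrow>
      (\<forall>(A :: 'a set) (r :: real) (R :: real) (f :: 'a \<Rightarrow> 'a).
         r > 0 \<and> R > 0 \<and> separated r A \<and> is_net R A \<and> bilipschitz_on A f \<longrightarrow>
         (let K = 16 * max (3 * real d / r) 1 in
          \<exists>F :: 'a \<Rightarrow> 'a. bilipschitz_on UNIV F \<and> (\<forall>x\<in>A. F x = f x) \<and>
            bilip_on UNIV F \<le> K * C (24 * sqrt (real d) * R\<^sup>2 * K ^ 3 * bilip_on A f)))"
  proof (intro allI impI)
    fix C :: "real \<Rightarrow> real" and A :: "'a set" and r R :: real and f :: "'a \<Rightarrow> 'a"
    assume HC: "mono_on {1..} C \<and> (\<forall>t\<ge>1. C t \<ge> 1) \<and>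
      (\<forall>f :: 'a \<Rightarrow> 'a. bilipschitz_on int_lattice f \<longrightarrow>
         (\<exists>F :: 'a \<Rightarrow> 'a. bilipschitz_on UNIV F \<and> (\<forall>x\<in>int_lattice. F x = f x) \<and>
            bilip_on UNIV F \<le> C (bilip_on int_lattice f)))"
    assume H: "r > 0 \<and> R > 0 \<and> separated r A \<and> is_net R A \<and> bilipschitz_on A f"
    define K where "K = 16 * max (3 * real d / r) 1"
    define T where "T = 24 * sqrt (real d) * R\<^sup>2 * K ^ 3 * bilip_on A f"
    have K16: "K \<ge> 16" unfolding K_def by simp
    obtain g :: "'a \<Rightarrow> 'a" where g1: "bilipschitz_on int_lattice g" and g2: "bilip_on int_lattice g \<le> T"
        and g3: "\<forall>G::'a\<Rightarrow>'a. bilipschitz_on UNIV G \<and> (\<forall>z\<in>int_lattice. G z = g z) \<longrightarrow>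
          (\<exists>F::'a\<Rightarrow>'a. bilipschitz_on UNIV F \<and> (\<forall>x\<in>A. F x = f x) \<and>
             bilip_on UNIV F \<le> K * bilip_on UNIV G)"
      using main[of r R A f] H unfolding K_def T_def d_def by blast
    obtain G where G: "bilipschitz_on UNIV G" "\<forall>z\<in>int_lattice. G z = g z"
        "bilip_on UNIV G \<le> C (bilip_on int_lattice g)" using HC g1 by blast
    obtain F where F: "bilipschitz_on UNIV F" "\<forall>x\<in>A. F x = f x" "bilip_on UNIV F \<le> K * bilip_on UNIV G"
      using g3 G by blast
    obtain x0 y0 :: 'a where xy0: "x0 \<in> int_lattice" "y0 \<in> int_lattice" "x0 \<noteq> y0" using lattice_two by blast
    have bg1: "bilip_on int_lattice g \<ge> 1" by (rule bilip_ge1[OF g1 xy0])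
    have "C (bilip_on int_lattice g) \<le> C T"
      using HC bg1 g2 by (intro mono_onD[of "{1..}" C]) auto
    hence "K * bilip_on UNIV G \<le> K * C T" using G(3) K16 by (intro mult_left_mono) auto
    hence "bilip_on UNIV F \<le> K * C T" using F(3) by linarith
    thus "let K = 16 * max (3 * real d / r) 1 in
          \<exists>F :: 'a \<Rightarrow> 'a. bilipschitz_on UNIV F \<and> (\<forall>x\<in>A. F x = f x) \<and>
            bilip_on UNIV F \<le> K * C (24 * sqrt (real d) * R\<^sup>2 * K ^ 3 * bilip_on A f)"
      using F(1,2) unfolding Let_def K_def[symmetric] T_def[symmetric] by blast
  qed
  show ?thesis using eq part2 by blast
qed

end
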